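(* Let $\mathbf z_1,\dots,\mathbf z_d\in\mathbb Z^d$ be a basis of $\mathbb Z^d$. Then for each $\boldsymbol\alpha\in\mathfrak S_2$ we have \[\frac{1}{D_{2,d-1}B_1^{d-1}}\Big(1-\frac{1}{2B_1B_2}\Big)\leq|L_{\boldsymbol\alpha}(\mathbf z_1)|\cdot|\underline{\mathbf z_1}|^{d-1}\leq\frac{1}{D_{2,d-1}B_1^{d-1}}\Big(1+\frac{1}{2B_1B_2}\Big).\]
   Context: Let $d\geq2$. $|\cdot|$ is the Euclidean norm, $\langle\cdot,\cdot\rangle$ the standard inner product. For $\mathbf x=(x_1,\dots,x_d)\in\mathbb R^d$ write $\underline{\mathbf x}=(x_1,\dots,x_{d-1})$. Let $\pi_d=\{\mathbf x\in\mathbb R^d:x_d=1\}$ and $L_{\boldsymbol\alpha}(\mathbf x)=\langle\boldsymbol\alpha,\mathbf x\rangle$ for $\boldsymbol\alpha\in\pi_d$. For given vectors $\mathbf z_1,\mathbf z_2,\dots$: $\det\underline\Lambda_{k,l}=|\underline{\mathbf z_k}\wedge\dots\wedge\underline{\mathbf z_{k+l-1}}|$ ($1\le l\le d-1$); $D_{k,l}=\det\underline\Lambda_{k,l}/|\underline{\mathbf z_k}|^l$; $B_k=|\underline{\mathbf z_{k+1}}|/|\underline{\mathbf z_k}|$; $R_k=1/(2|\underline{\mathbf z_{k+1}}|\det\underline\Lambda_{k,d-1})$; when $\underline{\mathbf z_k},\dots,\underline{\mathbf z_{k+d-2}}$ are linearly independent, $\boldsymbol\alpha_k$ is the unique point of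 $\pi_d$ orthogonal to $\mathbf z_k,\dots,\mathbf z_{k+d-2}$ and $\mathfrak S_k=\{\mathbf x\in\pi_d:|\mathbf x-\boldsymbol\alpha_k|\le R_k\}$. In the claim, $B_2$ and $R_2$ involve a vector $\mathbf z_3$ (with $\mathbf z_3$ among $\mathbf z_1,\dots,\mathbf z_d$ when $d\ge3$; when $d=2$ an additional vector $\mathbf z_3\in\mathbb Z^d$ is assumed given); whenever $\boldsymbol\alpha_k$ or $\mathfrak S_k$ appears it is implicitly assumed well defined. *)

theory Defs
  imports Complex_Main "Jordan_Normal_Form.Determinant"
begin

text \<open>Vectors of R^n are modelled as functions nat => real, only coordinates 0..n-1
  being relevant; the integer vectors z_k (k = 1,2,...) as nat => int.
  Coordinate x_i of the paper is coordinate i-1 here.\<close>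

definition ip :: "nat \<Rightarrow> (nat \<Rightarrow> real) \<Rightarrow> (nat \<Rightarrow> real) \<Rightarrow> real" where
  "ip n x y = (\<Sum>i<n. x i * y i)"

definition nrm :: "nat \<Rightarrow> (nat \<Rightarrow> real) \<Rightarrow> real" where
  "nrm n x = sqrt (ip n x x)"

definition rv :: "(nat \<Rightarrow> int) \<Rightarrow> (nat \<Rightarrow> real)" where
  "rv v = (\<lambda>i. real_of_int (v i))"

definition ul :: "nat \<Rightarrow> (nat \<Rightarrow> real) \<Rightarrow> (nat \<Rightarrow> real)" where
  "ul d x = (\<lambda>i. if i < d - 1 then x i else 0)"

text \<open>Euclidean norm of v_0 wedge ... wedge v_(l-1) in the exterior algebra of R^n,
  i.e. the square root of the Gram determinant.\<close>
definition wedge_norm :: "nat \<Rightarrow> nat \<Rightarrow> (nat \<Rightarrow> nat \<Rightarrow> real) \<Rightarrow> real" where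
  "wedge_norm n l v = sqrt (det (mat l l (\<lambda>(i,j). ip n (v i) (v j))))"

definition lin_indep :: "nat \<Rightarrow> nat \<Rightarrow> (nat \<Rightarrow> nat \<Rightarrow> real) \<Rightarrow> bool" where
  "lin_indep n l v \<longleftrightarrow>
     (\<forall>c :: nat \<Rightarrow> real. (\<forall>i<n. (\<Sum>j<l. c j * v j i) = 0) \<longrightarrow> (\<forall>j<l. c j = 0))"

definition Zbasis :: "nat \<Rightarrow> (nat \<Rightarrow> nat \<Rightarrow> int) \<Rightarrow> bool" where
  "Zbasis d z \<longleftrightarrow>
     (\<forall>v :: nat \<Rightarrow> int. \<exists>!c :: nat \<Rightarrow> int. (\<forall>j. j \<notin> {1..d} \<longrightarrow> c j = 0) \<and>
        (\<forall>i<d. v i = (\<Sum>j=1..d. c j * z j i)))"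

definition detLam :: "nat \<Rightarrow> (nat \<Rightarrow> nat \<Rightarrow> int) \<Rightarrow> nat \<Rightarrow> nat \<Rightarrow> real" where
  "detLam d z k l = wedge_norm (d - 1) l (\<lambda>i. ul d (rv (z (k + i))))"

definition Dkl :: "nat \<Rightarrow> (nat \<Rightarrow> nat \<Rightarrow> int) \<Rightarrow> nat \<Rightarrow> nat \<Rightarrow> real" where
  "Dkl d z k l = detLam d z k l / nrm (d - 1) (ul d (rv (z k))) ^ l"

definition Bk :: "nat \<Rightarrow> (nat \<Rightarrow> nat \<Rightarrow> int) \<Rightarrow> nat \<Rightarrow> real" where
  "Bk d z k = nrm (d - 1) (ul d (rv (z (k + 1)))) / nrm (d - 1) (ul d (rv (z k)))"

definition Rk :: "nat \<Rightarrow> (nat \<Rightarrow> nat \<Rightarrow> int) \<Rightarrow> nat \<Rightarrow> real" where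
  "Rk d z k = 1 / (2 * nrm (d - 1) (ul d (rv (z (k + 1)))) * detLam d z k (d - 1))"

definition in_pi :: "nat \<Rightarrow> (nat \<Rightarrow> real) \<Rightarrow> bool" where
  "in_pi d x \<longleftrightarrow> x (d - 1) = 1 \<and> (\<forall>i\<ge>d. x i = 0)"

definition Lform :: "nat \<Rightarrow> (nat \<Rightarrow> real) \<Rightarrow> (nat \<Rightarrow> real) \<Rightarrow> real" where
  "Lform d \<alpha> x = ip d \<alpha> x"

definition alpha_k :: "nat \<Rightarrow> (nat \<Rightarrow> nat \<Rightarrow> int) \<Rightarrow> nat \<Rightarrow> (nat \<Rightarrow> real)" where
  "alpha_k d z k = (THE a. in_pi d a \<and> (\<forall>j\<in>{k..k + d - 2}. ip d a (rv (z j)) = 0))"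

definition Sk :: "nat \<Rightarrow> (nat \<Rightarrow> nat \<Rightarrow> int) \<Rightarrow> nat \<Rightarrow> (nat \<Rightarrow> real) set" where
  "Sk d z k = {x. in_pi d x \<and> nrm d (\<lambda>i. x i - alpha_k d z k i) \<le> Rk d z k}"

end

theory Submission
  imports Defs
begin

lemma sum_shift1: "(\<Sum>j=1..(d::nat). f j) = (\<Sum>j<d. f (Suc j))"
  by (induction d) auto

lemma sum_ind: "(\<Sum>l\<in>A. (f l :: real) * (if l = j then 1 else 0)) = (if j \<in> A \<and> finite A then f j else 0)"
  by (cases "finite A") (auto simp: if_distrib sum.delta' cong: if_cong)

lemma cs_sum:
  fixes a b :: "nat \<Rightarrow> real"
  shows "(\<Sum>i\<in>A. a i * b i)^2 \<le> (\<Sum>i\<in>A. a i * a i) * (\<Sum>i\<in>A. b i * b i)"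
proof -
  define P where "P = (\<Sum>i\<in>A. a i * a i)"
  define Q where "Q = (\<Sum>i\<in>A. b i * b i)"
  define C where "C = (\<Sum>i\<in>A. a i * b i)"
  have Q0: "Q \<ge> 0" unfolding Q_def by (intro sum_nonneg) auto
  show ?thesis
  proof (cases "Q = 0")
    case True
    have "\<forall>i\<in>A. b i * b i = 0" if "finite A"
      using True that unfolding Q_def by (subst sum_nonneg_eq_0_iff[symmetric]) auto
    then have "C = 0" unfolding C_def by (cases "finite A") auto
    then show ?thesis using True by (simp add: C_def Q_def)
  next
    case False
    have "0 \<le> (\<Sum>i\<in>A. (Q * a i - C * b i)^2)" by (intro sum_nonneg) auto
    also have "\<dots> = (\<Sum>i\<in>A. (Q*Q) * (a i * a i) - (2*Q*C) * (a i * b i) + (C*C) * (b i * b i))"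
      by (intro sum.cong) (auto simp: power2_eq_square algebra_simps)
    also have "\<dots> = Q*Q*P - 2*Q*C*C + C*C*Q"
      unfolding P_def Q_def C_def
      by (simp add: sum.distrib sum_subtractf sum_distrib_left[symmetric])
    finally have "0 \<le> Q * (Q*P - C*C)" by (simp add: algebra_simps)
    then have "C*C \<le> P * Q" using False Q0
      by (simp add: zero_le_mult_iff algebra_simps)
    then show ?thesis by (simp add: C_def P_def Q_def power2_eq_square)
  qed
qed
lemma final_arith:
  fixes D N1 N2 N3 L e :: real and n :: nat
  assumes "D > 0" "N1 \<ge> 0" "N2 > 0" "N3 > 0" "\<bar>L\<bar> = 1 / D" "\<bar>e\<bar> \<le> 1 / (2 * N3 * D) * N1" "n \<ge> 1"
  shows "1 / ((D / N2^n) * (N2/N1)^n) * (1 - 1 / (2 * (N2/N1) * (N3/N2))) \<le> \<bar>L + e\<bar> * N1^n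
       \<and> \<bar>L + e\<bar> * N1^n \<le> 1 / ((D / N2^n) * (N2/N1)^n) * (1 + 1 / (2 * (N2/N1) * (N3/N2)))"
proof (cases "N1 = 0")
  case True
  obtain m where "n = Suc m" using assms by (cases n) auto
  then show ?thesis using assms True by simp
next
  case False
  then have N1: "N1 > 0" using assms by simp
  have K: "1 / ((D / N2^n) * (N2/N1)^n) = N1^n / D" using N1 assms
    by (simp add: power_divide field_simps)
  have B: "1 / (2 * (N2/N1) * (N3/N2)) = N1 / (2 * N3)" using N1 assms by (simp add: field_simps)
  have e: "\<bar>e\<bar> \<le> N1 / (2 * N3 * D)" using assms by simp
  have up: "\<bar>L + e\<bar> \<le> 1 / D + N1 / (2 * N3 * D)" using abs_triangle_ineq[of L e] assms e by linarith
  have lo: "1 / D - N1 / (2 * N3 * D) \<le> \<bar>L + e\<bar>" using abs_triangle_ineq2[of L "-e"] assms e by simp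
  have p: "N1^n \<ge> 0" using N1 by simp
  have eq1: "N1^n / D * (1 + N1 / (2 * N3)) = (1 / D + N1 / (2 * N3 * D)) * N1^n" using assms by (simp add: field_simps)
  have eq2: "N1^n / D * (1 - N1 / (2 * N3)) = (1 / D - N1 / (2 * N3 * D)) * N1^n" using assms by (simp add: field_simps)
  show ?thesis unfolding K B eq1 eq2 using mult_right_mono[OF up p] mult_right_mono[OF lo p] by simp
qed
theorem lemma2:
  fixes d :: nat and z :: "nat \<Rightarrow> nat \<Rightarrow> int" and \<alpha> :: "nat \<Rightarrow> real"
  assumes "d \<ge> 2"
    and "Zbasis d z"
    and "lin_indep (d - 1) (d - 1) (\<lambda>i. ul d (rv (z (2 + i))))"
    and "nrm (d - 1) (ul d (rv (z 3))) \<noteq> 0"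
    and "\<alpha> \<in> Sk d z 2"
  shows "1 / (Dkl d z 2 (d - 1) * Bk d z 1 ^ (d - 1)) * (1 - 1 / (2 * Bk d z 1 * Bk d z 2))
           \<le> \<bar>Lform d \<alpha> (rv (z 1))\<bar> * nrm (d - 1) (ul d (rv (z 1))) ^ (d - 1)
       \<and> \<bar>Lform d \<alpha> (rv (z 1))\<bar> * nrm (d - 1) (ul d (rv (z 1))) ^ (d - 1)
           \<le> 1 / (Dkl d z 2 (d - 1) * Bk d z 1 ^ (d - 1)) * (1 + 1 / (2 * Bk d z 1 * Bk d z 2))"
proof -
  define n where "n = d - 1"
  have dn: "d = Suc n" and n1: "n \<ge> 1" using assms(1) by (auto simp: n_def)
  define zr where "zr = (\<lambda>j k. real_of_int (z j k))"
  define U :: "real mat" where "U = mat n n (\<lambda>(j,k). zr (j+2) k)"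
  have Uc: "U \<in> carrier_mat n n" by (simp add: U_def)
  have li: "\<forall>c::nat\<Rightarrow>real. (\<forall>i<n. (\<Sum>j<n. c j * zr (2+j) i) = 0) \<longrightarrow> (\<forall>j<n. c j = 0)"
    using assms(3) by (simp add: lin_indep_def ul_def rv_def zr_def n_def)
  have dUt: "det (transpose_mat U) \<noteq> 0"
  proof
    assume "det (transpose_mat U) = 0"
    then obtain v where v: "v \<in> carrier_vec n" "v \<noteq> 0\<^sub>v n" "transpose_mat U *\<^sub>v v = 0\<^sub>v n"
      using det_0_iff_vec_prod_zero_field[of "transpose_mat U" n] Uc by auto
    define c where "c = (\<lambda>j. if j < n then v $ j else 0)"
    have "\<forall>i<n. (\<Sum>j<n. c j * zr (2+j) i) = 0"
    proof (intro allI impI)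
      fix i assume i: "i < n"
      have "(transpose_mat U *\<^sub>v v) $ i = 0" using v i by simp
      then show "(\<Sum>j<n. c j * zr (2+j) i) = 0"
        using i v(1) by (simp add: U_def c_def scalar_prod_def lessThan_atLeast0 algebra_simps)
    qed
    with li have "\<forall>j<n. c j = 0" by blast
    then have "v = 0\<^sub>v n" using v(1) by (intro eq_vecI) (auto simp: c_def)
    with v(2) show False by simp
  qed
  have dU: "det U \<noteq> 0" using dUt det_transpose[OF Uc] by simp
  have Uker: "\<forall>k<n. x k = 0" if h: "\<forall>j<n. (\<Sum>k<n. x k * zr (j+2) k) = 0" for x :: "nat \<Rightarrow> real"
  proof -
    define v where "v = vec n x"
    have vc: "v \<in> carrier_vec n" by (simp add: v_def)
    have "U *\<^sub>v v = 0\<^sub>v n"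
      using h by (intro eq_vecI) (auto simp: U_def v_def scalar_prod_def lessThan_atLeast0 algebra_simps)
    then have "v = 0\<^sub>v n" using det_0_iff_vec_prod_zero_field[OF Uc] dU vc by auto
    then show ?thesis by (auto simp: v_def vec_eq_iff)
  qed
  have ex: "\<forall>i. \<exists>c. (\<forall>j. j \<notin> {1..d} \<longrightarrow> c j = 0) \<and>
        (\<forall>k<d. (if k = i then 1 else 0) = (\<Sum>j=1..d. c j * z j k))"
  proof
    fix i
    show "\<exists>c. (\<forall>j. j \<notin> {1..d} \<longrightarrow> c j = 0) \<and>
        (\<forall>k<d. (if k = i then 1 else 0) = (\<Sum>j=1..d. c j * z j k))"
      using ex1_implies_ex[OF assms(2)[unfolded Zbasis_def, rule_format, of "\<lambda>k. if k = i then 1 else 0"]]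
      by simp
  qed
  obtain cc where cc: "\<And>i k. k < d \<Longrightarrow> (if k = i then 1 else 0) = (\<Sum>j=1..d. cc i j * z j k)"
    using choice[OF ex] by blast
  define Mi :: "int mat" where "Mi = mat d d (\<lambda>(i,k). z (Suc i) k)"
  define Ci :: "int mat" where "Ci = mat d d (\<lambda>(i,j). cc i (Suc j))"
  define M :: "real mat" where "M = mat d d (\<lambda>(i,k). zr (Suc i) k)"
  define C :: "real mat" where "C = mat d d (\<lambda>(i,j). real_of_int (cc i (Suc j)))"
  have Mc: "M \<in> carrier_mat d d" and Cc: "C \<in> carrier_mat d d" by (auto simp: M_def C_def)
  have CMi: "Ci * Mi = 1\<^sub>m d"
  proof (rule eq_matI)
    fix i k assume "i < dim_row (1\<^sub>m d)" "k < dim_col (1\<^sub>m d)"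
    then have ik: "i < d" "k < d" by auto
    have "(Ci * Mi) $$ (i,k) = (\<Sum>j<d. cc i (Suc j) * z (Suc j) k)"
      using ik by (simp add: Ci_def Mi_def scalar_prod_def lessThan_atLeast0)
    also have "\<dots> = (if k = i then 1 else 0)" using cc[OF ik(2), of i] sum_shift1[of "\<lambda>j. cc i j * z j k" d] by simp
    finally show "(Ci * Mi) $$ (i,k) = 1\<^sub>m d $$ (i,k)" using ik by auto
  qed (auto simp: Ci_def Mi_def)
  have CM: "C * M = 1\<^sub>m d"
  proof (rule eq_matI)
    fix i k assume "i < dim_row (1\<^sub>m d)" "k < dim_col (1\<^sub>m d)"
    then have ik: "i < d" "k < d" by auto
    have "(C * M) $$ (i,k) = real_of_int ((Ci * Mi) $$ (i,k))"
      using ik by (simp add: C_def M_def Ci_def Mi_def zr_def scalar_prod_def)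
    also have "\<dots> = (if i = k then 1 else 0)" using CMi ik by simp
    finally show "(C * M) $$ (i,k) = 1\<^sub>m d $$ (i,k)" using ik by auto
  qed (auto simp: C_def M_def)
  have MC: "M * C = 1\<^sub>m d" by (rule mat_mult_left_right_inverse[OF Cc Mc CM])
  have "det Ci * det Mi = 1" using det_mult[of Ci d Mi] CMi by (simp add: Ci_def Mi_def)
  then have dMi: "\<bar>det Mi\<bar> = 1" by (auto simp: zmult_eq_1_iff)
  have "M = map_mat real_of_int Mi" by (rule eq_matI) (auto simp: M_def Mi_def zr_def)
  then have dM: "\<bar>det M\<bar> = 1" using dMi of_int_hom.hom_det[of Mi]
    by (metis of_int_1 of_int_abs)
  define \<beta> where "\<beta> = (\<lambda>k. C $$ (k, 0))"
  have Mb: "(\<Sum>k<d. zr (Suc i) k * \<beta> k) = (if i = 0 then 1 else 0)" if i: "i < d" for i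
  proof -
    have "(M * C) $$ (i, 0) = (\<Sum>k<d. zr (Suc i) k * \<beta> k)"
      using i by (simp add: M_def C_def \<beta>_def scalar_prod_def lessThan_atLeast0)
    then show ?thesis using MC i dn by auto
  qed
  have bn: "\<beta> n \<noteq> 0"
  proof
    assume b0: "\<beta> n = 0"
    have "\<forall>j<n. (\<Sum>k<n. \<beta> k * zr (j+2) k) = 0"
    proof (intro allI impI)
      fix j assume j: "j < n"
      have "(\<Sum>k<d. zr (Suc (Suc j)) k * \<beta> k) = 0" using Mb[of "Suc j"] j dn by simp
      then show "(\<Sum>k<n. \<beta> k * zr (j+2) k) = 0" using b0 dn by (simp add: algebra_simps)
    qed
    from Uker[OF this] have "\<forall>k<n. \<beta> k = 0" .
    then have "(\<Sum>k<d. zr (Suc 0) k * \<beta> k) = 0" using b0 dn by simp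
    then show False using Mb[of 0] dn by simp
  qed
  define a0 where "a0 = (\<lambda>k. if k < d then \<beta> k / \<beta> n else 0)"
  have a0P: "in_pi d a0 \<and> (\<forall>j\<in>{2..2 + d - 2}. ip d a0 (rv (z j)) = 0)"
  proof
    show "in_pi d a0" using bn dn by (simp add: in_pi_def a0_def)
    show "\<forall>j\<in>{2..2 + d - 2}. ip d a0 (rv (z j)) = 0"
    proof
      fix j assume "j \<in> {2..2 + d - 2}"
      then obtain i where i: "j = Suc i" "1 \<le> i" "i < d" using dn by (cases j) auto
      have "ip d a0 (rv (z j)) = (\<Sum>k<d. zr (Suc i) k * \<beta> k) / \<beta> n"
        by (simp add: ip_def a0_def rv_def zr_def i sum_divide_distrib algebra_simps)
      then show "ip d a0 (rv (z j)) = 0" using Mb[OF i(3)] i(2) by simp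
    qed
  qed
  have ex1: "\<exists>!a. in_pi d a \<and> (\<forall>j\<in>{2..2 + d - 2}. ip d a (rv (z j)) = 0)"
  proof (rule ex1I[of _ a0])
    show "in_pi d a0 \<and> (\<forall>j\<in>{2..2 + d - 2}. ip d a0 (rv (z j)) = 0)" by (rule a0P)
  next
    fix a assume a: "in_pi d a \<and> (\<forall>j\<in>{2..2 + d - 2}. ip d a (rv (z j)) = 0)"
    have "\<forall>k<n. a k - a0 k = 0"
    proof (rule Uker, intro allI impI)
      fix j assume j: "j < n"
      have j2: "j + 2 \<in> {2..2 + d - 2}" using j dn by auto
      have "ip d a (rv (z (j+2))) = 0" using a j2 by blast
      moreover have "ip d a0 (rv (z (j+2))) = 0" using a0P j2 by blast
      moreover have "a n = 1" "a0 n = 1" using a a0P dn by (auto simp: in_pi_def)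
      ultimately show "(\<Sum>k<n. (a k - a0 k) * zr (j+2) k) = 0"
        using dn by (simp add: ip_def rv_def zr_def sum_subtractf algebra_simps)
    qed
    moreover have "a n = 1" "a0 n = 1" using a a0P dn by (auto simp: in_pi_def)
    moreover have "\<forall>k\<ge>d. a k = 0" "\<forall>k\<ge>d. a0 k = 0" using a a0P by (auto simp: in_pi_def)
    ultimately show "a = a0"
      using dn by (intro ext) (metis less_antisym not_less_eq_eq right_minus_eq not_less)
  qed
  define a2 where "a2 = alpha_k d z 2"
  have a2P: "in_pi d a2 \<and> (\<forall>j\<in>{2..2 + d - 2}. ip d a2 (rv (z j)) = 0)"
    unfolding a2_def alpha_k_def by (rule theI'[OF ex1])
  define L where "L = ip d a2 (rv (z 1))"
  have a2n: "a2 n = 1" using a2P dn by (simp add: in_pi_def)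
  have a2orth: "ip d a2 (rv (z (Suc (Suc i)))) = 0" if "i < n" for i
  proof -
    have "Suc (Suc i) \<in> {2..2 + d - 2}" using that dn by auto
    then show ?thesis using a2P by blast
  qed
  define N :: "real mat" where "N = mat d d (\<lambda>(l,k). if k < n then (if l = k then 1 else 0) else a2 l)"
  have Nc: "N \<in> carrier_mat d d" by (simp add: N_def)
  have dN: "det N = 1"
  proof -
    have "upper_triangular N" using dn by (auto simp: upper_triangular_def N_def)
    then have "det N = prod_list (diag_mat N)" using det_upper_triangular Nc by blast
    also have "\<dots> = (\<Prod>i = 0..<d. N $$ (i,i))" by (simp add: prod_list_diag_prod N_def)
    also have "\<dots> = 1" using a2n dn by (intro prod.neutral) (auto simp: N_def less_Suc_eq)
    finally show ?thesis .
  qed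
  define P where "P = M * N"
  have Pc: "P \<in> carrier_mat d d" using Mc Nc by (simp add: P_def)
  have dP: "det P = det M" using det_mult[OF Mc Nc] dN by (simp add: P_def)
  have Pcol: "P $$ (i, n) = (if i = 0 then L else 0)" if "i < d" for i
  proof -
    have "P $$ (i,n) = (\<Sum>k<d. zr (Suc i) k * a2 k)"
      using that dn by (simp add: P_def M_def N_def scalar_prod_def lessThan_atLeast0)
    also have "\<dots> = ip d a2 (rv (z (Suc i)))" by (simp add: ip_def rv_def zr_def mult.commute)
    finally show ?thesis using a2orth[of "i - 1"] that dn by (cases i) (auto simp: L_def)
  qed
  have PU: "mat_delete P 0 n = U"
  proof (rule eq_matI)
    fix i j assume "i < dim_row U" "j < dim_col U"
    then have ij: "i < n" "j < n" by (auto simp: U_def)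
    have "mat_delete P 0 n $$ (i,j) = P $$ (Suc i, j)" using ij Pc dn by (simp add: mat_delete_def)
    also have "\<dots> = (\<Sum>l<d. zr (Suc (Suc i)) l * (if l = j then 1 else 0))"
      using ij dn by (simp add: P_def M_def N_def scalar_prod_def lessThan_atLeast0)
    also have "\<dots> = zr (Suc (Suc i)) j" using ij dn by (simp only: sum_ind) simp
    finally show "mat_delete P 0 n $$ (i,j) = U $$ (i,j)" using ij by (simp add: U_def)
  qed (use Pc dn in \<open>auto simp: U_def\<close>)
  have "det P = (\<Sum>i<d. P $$ (i,n) * cofactor P i n)" using laplace_expansion_column[OF Pc] dn by simp
  also have "\<dots> = P $$ (0,n) * cofactor P 0 n + (\<Sum>i<n. P $$ (Suc i, n) * cofactor P (Suc i) n)"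
    unfolding dn by (rule sum.lessThan_Suc_shift)
  also have "(\<Sum>i<n. P $$ (Suc i, n) * cofactor P (Suc i) n) = 0"
    by (rule sum.neutral) (use Pcol dn in auto)
  also have "cofactor P 0 n = (-1)^n * det U" by (simp add: cofactor_def PU)
  finally have "det M = L * ((-1)^n * det U)" using dP Pcol[of 0] dn by simp
  then have LU: "\<bar>L\<bar> * \<bar>det U\<bar> = 1" using dM by (simp add: abs_mult power_abs)
  have dLam: "detLam d z 2 n = \<bar>det U\<bar>"
  proof -
    have G: "mat n n (\<lambda>(i,j). ip n (ul d (rv (z (2+i)))) (ul d (rv (z (2+j))))) = U * transpose_mat U"
      using dn by (intro eq_matI) (auto simp: U_def ip_def ul_def rv_def zr_def scalar_prod_def lessThan_atLeast0)
    have "detLam d z 2 n = sqrt (det U * det U)"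
      unfolding detLam_def wedge_norm_def
      using G dn det_mult[OF Uc transpose_carrier_mat[THEN iffD2, OF Uc]] det_transpose[OF Uc] by simp
    then show ?thesis by simp
  qed
  have nrmz: "nrm (d - 1) (ul d (rv (z j))) = sqrt (\<Sum>k<n. zr j k * zr j k)" for j
    using dn by (simp add: nrm_def ip_def ul_def rv_def zr_def)
  have N2: "nrm (d - 1) (ul d (rv (z 2))) > 0"
  proof -
    have "(\<Sum>k<n. zr 2 k * zr 2 k) \<noteq> 0"
    proof
      assume h: "(\<Sum>k<n. zr 2 k * zr 2 k) = 0"
      have z2: "\<forall>k<n. zr 2 k = 0"
        using h by (subst (asm) sum_nonneg_eq_0_iff) auto
      define c :: "nat \<Rightarrow> real" where "c = (\<lambda>j. if j = 0 then 1 else 0)"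
      have "\<forall>i<n. (\<Sum>j<n. c j * zr (2+j) i) = 0"
      proof (intro allI impI)
        fix i assume i: "i < n"
        have "(\<Sum>j<n. c j * zr (2+j) i) = (\<Sum>j<n. zr (2+j) i * (if j = 0 then 1 else 0))"
          by (simp add: c_def mult.commute)
        also have "\<dots> = zr 2 i" using n1 by (simp only: sum_ind) simp
        finally show "(\<Sum>j<n. c j * zr (2+j) i) = 0" using z2 i by simp
      qed
      with li have "c 0 = 0" using n1 by auto
      then show False by (simp add: c_def)
    qed
    moreover have "(\<Sum>k<n. zr 2 k * zr 2 k) \<ge> 0" by (intro sum_nonneg) auto
    ultimately show ?thesis unfolding nrmz by simp
  qed
  have N3: "nrm (d - 1) (ul d (rv (z 3))) > 0"
  proof -
    have "(\<Sum>k<n. zr 3 k * zr 3 k) \<ge> 0" by (intro sum_nonneg) auto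
    then show ?thesis using assms(4) unfolding nrmz by simp
  qed
  have N1: "nrm (d - 1) (ul d (rv (z 1))) \<ge> 0" unfolding nrmz by (simp add: sum_nonneg)
  have aS: "in_pi d \<alpha>" "nrm d (\<lambda>i. \<alpha> i - a2 i) \<le> Rk d z 2"
    using assms(5) by (auto simp: Sk_def a2_def)
  define e where "e = (\<Sum>i<n. (\<alpha> i - a2 i) * zr 1 i)"
  have an: "\<alpha> n = 1" using aS(1) dn by (simp add: in_pi_def)
  have Le: "Lform d \<alpha> (rv (z 1)) = L + e"
  proof -
    have "Lform d \<alpha> (rv (z 1)) - L = (\<Sum>i<d. (\<alpha> i - a2 i) * zr 1 i)"
      by (simp add: Lform_def L_def ip_def rv_def zr_def sum_subtractf[symmetric] algebra_simps)
    also have "\<dots> = e" using an a2n dn by (simp add: e_def)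
    finally show ?thesis by simp
  qed
  have "e^2 \<le> (\<Sum>i<n. (\<alpha> i - a2 i) * (\<alpha> i - a2 i)) * (\<Sum>i<n. zr 1 i * zr 1 i)"
    unfolding e_def by (rule cs_sum)
  then have "sqrt (e^2) \<le> sqrt (\<Sum>i<n. (\<alpha> i - a2 i) * (\<alpha> i - a2 i)) * sqrt (\<Sum>i<n. zr 1 i * zr 1 i)"
    by (metis real_sqrt_le_mono real_sqrt_mult)
  moreover have "sqrt (\<Sum>i<n. (\<alpha> i - a2 i) * (\<alpha> i - a2 i)) \<le> nrm d (\<lambda>i. \<alpha> i - a2 i)"
    unfolding nrm_def ip_def using dn by (intro real_sqrt_le_mono sum_mono2) auto
  ultimately have "\<bar>e\<bar> \<le> nrm d (\<lambda>i. \<alpha> i - a2 i) * nrm (d - 1) (ul d (rv (z 1)))"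
  proof -
    have B: "sqrt (\<Sum>i<n. zr 1 i * zr 1 i) = nrm (d - 1) (ul d (rv (z 1)))" by (simp only: nrmz)
    note h1 = \<open>sqrt (e^2) \<le> _\<close>
    note h2 = \<open>sqrt (\<Sum>i<n. (\<alpha> i - a2 i) * (\<alpha> i - a2 i)) \<le> nrm d (\<lambda>i. \<alpha> i - a2 i)\<close>
    have "\<bar>e\<bar> \<le> sqrt (\<Sum>i<n. (\<alpha> i - a2 i) * (\<alpha> i - a2 i)) * nrm (d - 1) (ul d (rv (z 1)))"
      using h1 B by simp
    also have "\<dots> \<le> nrm d (\<lambda>i. \<alpha> i - a2 i) * nrm (d - 1) (ul d (rv (z 1)))"
      by (rule mult_right_mono[OF h2 N1])
    finally show ?thesis .
  qed
  also have "\<dots> \<le> Rk d z 2 * nrm (d - 1) (ul d (rv (z 1)))" by (rule mult_right_mono[OF aS(2) N1])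
  finally have eb: "\<bar>e\<bar> \<le> 1 / (2 * nrm (d - 1) (ul d (rv (z 3))) * \<bar>det U\<bar>) * nrm (d - 1) (ul d (rv (z 1)))"
    using dLam by (simp add: Rk_def n_def)
  have Lb: "\<bar>L\<bar> = 1 / \<bar>det U\<bar>" using LU dU by (simp add: field_simps)
  have "Dkl d z 2 (d - 1) = \<bar>det U\<bar> / nrm (d - 1) (ul d (rv (z 2))) ^ (d - 1)"
    using dLam by (simp add: Dkl_def n_def)
  moreover have "Bk d z 1 = nrm (d - 1) (ul d (rv (z 2))) / nrm (d - 1) (ul d (rv (z 1)))"
    unfolding Bk_def by (simp only: one_add_one)
  moreover have "Bk d z 2 = nrm (d - 1) (ul d (rv (z 3))) / nrm (d - 1) (ul d (rv (z 2)))"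
    by (simp add: Bk_def)
  ultimately show ?thesis unfolding Le
    using final_arith[OF _ N1 N2 N3 Lb eb, of "d - 1"] dU n1 n_def by simp
qed
end
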